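(* Let $h \ge 2$, $N_H \ge 1$, $f \ge 0$ and $0 \le e \le f$ be integers, and consider an IBF with $h$ hash functions and $N = h N_H$ cells storing $f$ elements, whose state matrix is an $h$-tuple $(\mathbf{F}_1, \ldots, \mathbf{F}_h) \in \mathcal{S}_{N_H,f}^h$. Then the number of $h$-tuples $(\mathbf{F}_1, \ldots, \mathbf{F}_h) \in \mathcal{S}_{N_H,f}^h$ for which the extraction process extracts at least $e$ elements is at least $$\Theta(N_H, f, h, e) = \binom{f}{e} \sum_{\mathbf{b} \in \mathcal{T}_e \,:\, \xi(\mathbf{b}) \ge e} \left( \Psi(e, \mathbf{b}) \prod_{i=1}^{h} \left[ \binom{N_H}{b_i}\, b_i!\, z(N_H - b_i, f - b_i) \right] \right).$$
   Context: For integers $n, m \ge 0$, let $\mathcal{S}_{n,m}$ denote the set of all $n \times m$ binary matrices in which every column has Hamming weight exactly one (so $|\mathcal{S}_{n,m}| = n^m$; $\mathcal{S}_{n,0}$ consists of the single empty matrix, and $\mathcal{S}_{0,m} = \emptyset$ for $m \ge 1$). A binary matrix is called a stopping matrix if none of its rows has Hamming weight exactly one. Let $z(n, m)$ denote the number of matrices in $\mathcal{S}_{n,m}$ that are stopping matrices (so $z(n,0)=1$, $z(0,m)=0$ for $m\ge1$). The state matrix of an IBF with $h$ hash functions, $N = hN_H$ cells (partitioned into $h$ sub-filters of $N_H$ cells, the $i$-th hash function mapping into the $i$-th sub-filter) and $f$ inserted elements $x_1,\dots,x_f$ is the $h$-tuple $(\mathbf{F}_1,\dots,\mathbf{F}_h)$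 with $\mathbf{F}_i \in \mathcal{S}_{N_H,f}$, where $\mathbf{F}_i$ has a $1$ in row $r$, column $j$ iff the $i$-th hash function maps $x_j$ to cell $r$ of the $i$-th sub-filter; equivalently the $hN_H \times f$ matrix obtained by stacking $\mathbf{F}_1,\dots,\mathbf{F}_h$ vertically. Extraction (peeling) process: columns are removed simultaneously from all blocks; while there is some $i \in [h]$ and some row of $\mathbf{F}_i$ whose restriction to the not-yet-removed columns has Hamming weight exactly one, remove (extract) the column containing that unique $1$; stop when no block has a row of weight one on the remaining columns. The number of extracted elements is the number of removed columns (independent of the order of removals). For $e \in \mathbb{N}$, $\mathcal{T}_e$ is the set of vectors $\mathbf{b} = (b_1, \ldots, b_h) \in \mathbb{N}^h$ with all entries in $\{0, 1, \ldots, e\}$, and $\xi(\mathbf{b}) = \sum_{i=1}^h b_i$. The function $\Psi$ is defined recursively for $e \in \mathbb{N}$, $\mathbf{b} \in \mathbb{N}^h$ by $\Psi(0, \mathbf{0}) = 1$, $\Psi(0, \mathbf{b}) = 0$ for $\mathbf{b} \ne \mathbf{0}$, and for $e \ge 1$: $\Psi(e, \mathbf{b}) = \prod_{i=1}^{h} \binom{e}{b_i} - \sum_{j=0}^{e-1} \binom{e}{j} \Psi(j, \mathbf{b})$. ($\mathbb{N}$ includes $0$.) *)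

theory Defs
  imports Main "HOL-Library.FuncSet"
begin

text \<open>A binary matrix is represented as a predicate  M r j  (row r, column j),
  required to vanish outside the index range.\<close>
type_synonym bmat = "nat \<Rightarrow> nat \<Rightarrow> bool"

definition S_set :: "nat \<Rightarrow> nat \<Rightarrow> bmat set" where
  "S_set n m = {M. (\<forall>r j. M r j \<longrightarrow> r < n \<and> j < m) \<and>
                    (\<forall>j<m. card {r. r < n \<and> M r j} = 1)}"

definition stopping :: "nat \<Rightarrow> nat \<Rightarrow> bmat \<Rightarrow> bool" where
  "stopping n m M \<longleftrightarrow> (\<forall>r<n. card {j. j < m \<and> M r j} \<noteq> 1)"

definition z :: "nat \<Rightarrow> nat \<Rightarrow> nat" where
  "z n m = card {M \<in> S_set n m. stopping n m M}"

definition states :: "nat \<Rightarrow> nat \<Rightarrow> nat \<Rightarrow> (nat \<Rightarrow> bmat) set" where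
  "states h NH f = PiE {..<h} (\<lambda>_. S_set NH f)"

definition peelable :: "nat \<Rightarrow> nat \<Rightarrow> nat \<Rightarrow> (nat \<Rightarrow> bmat) \<Rightarrow> nat set \<Rightarrow> nat \<Rightarrow> bool" where
  "peelable h NH f Fs R c \<longleftrightarrow> c < f \<and> c \<notin> R \<and>
     (\<exists>i<h. \<exists>r<NH. {j. j < f \<and> j \<notin> R \<and> Fs i r j} = {c})"

inductive peel_reach :: "nat \<Rightarrow> nat \<Rightarrow> nat \<Rightarrow> (nat \<Rightarrow> bmat) \<Rightarrow> nat set \<Rightarrow> bool"
  for h NH f Fs where
  start: "peel_reach h NH f Fs {}"
| step: "peel_reach h NH f Fs R \<Longrightarrow> peelable h NH f Fs R c \<Longrightarrow> peel_reach h NH f Fs (insert c R)"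

definition peel_final :: "nat \<Rightarrow> nat \<Rightarrow> nat \<Rightarrow> (nat \<Rightarrow> bmat) \<Rightarrow> nat set \<Rightarrow> bool" where
  "peel_final h NH f Fs R \<longleftrightarrow> peel_reach h NH f Fs R \<and>
     (\<forall>i<h. \<forall>r<NH. card {j. j < f \<and> j \<notin> R \<and> Fs i r j} \<noteq> 1)"

text \<open>The extraction process extracts at least e elements (the number extracted is
  independent of the order of removals, so we ask for a terminal run).\<close>
definition extracts_at_least :: "nat \<Rightarrow> nat \<Rightarrow> nat \<Rightarrow> (nat \<Rightarrow> bmat) \<Rightarrow> nat \<Rightarrow> bool" where
  "extracts_at_least h NH f Fs e \<longleftrightarrow> (\<exists>R. peel_final h NH f Fs R \<and> e \<le> card R)"

function Psi :: "nat \<Rightarrow> nat \<Rightarrow> (nat \<Rightarrow> nat) \<Rightarrow> int" where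
  "Psi h e b = (if e = 0 then (if (\<forall>i<h. b i = 0) then 1 else 0)
     else (\<Prod>i<h. int (e choose b i)) - (\<Sum>j<e. int (e choose j) * Psi h j b))"
  by auto
termination
  by (relation "measure (\<lambda>(h, e, b). e)") auto

definition T_set :: "nat \<Rightarrow> nat \<Rightarrow> (nat \<Rightarrow> nat) set" where
  "T_set h e = PiE {..<h} (\<lambda>_. {0..e})"

definition xi :: "nat \<Rightarrow> (nat \<Rightarrow> nat) \<Rightarrow> nat" where
  "xi h b = (\<Sum>i<h. b i)"

definition Theta :: "nat \<Rightarrow> nat \<Rightarrow> nat \<Rightarrow> nat \<Rightarrow> int" where
  "Theta NH f h e = int (f choose e) *
     (\<Sum>b \<in> {b \<in> T_set h e. xi h b \<ge> e}.
        Psi h e b * (\<Prod>i<h. int ((NH choose b i) * fact (b i) * z (NH - b i) (f - b i))))"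

end

theory Submission imports Defs begin

definition mat :: "nat \<Rightarrow> (nat \<Rightarrow> nat) \<Rightarrow> bmat" where
  "mat m g = (\<lambda>r j. j < m \<and> g j = r)"

definition Sg :: "nat set \<Rightarrow> (nat \<Rightarrow> nat) \<Rightarrow> nat set" where
  "Sg C g = {j\<in>C. \<forall>j'\<in>C. g j' = g j \<longrightarrow> j' = j}"

definition Stop :: "nat set \<Rightarrow> nat set \<Rightarrow> (nat \<Rightarrow> nat) set" where
  "Stop C Rw = {g \<in> C \<rightarrow>\<^sub>E Rw. Sg C g = {}}"

lemma mat_inj: "inj_on (mat m) ({..<m} \<rightarrow>\<^sub>E {..<n})"
proof (rule inj_onI)
  fix g g' assume g: "g \<in> {..<m} \<rightarrow>\<^sub>E {..<n}" and g': "g' \<in> {..<m} \<rightarrow>\<^sub>E {..<n}"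
    and eq: "mat m g = mat m g'"
  show "g = g'"
  proof
    fix j show "g j = g' j"
    proof (cases "j < m")
      case True
      from fun_cong[OF fun_cong[OF eq, of "g j"], of j] True show ?thesis by (simp add: mat_def)
    next
      case False then show ?thesis using g g' by (auto simp: PiE_def extensional_def)
    qed
  qed
qed

lemma mat_img: "mat m ` ({..<m} \<rightarrow>\<^sub>E {..<n}) = S_set n m"
proof
  show "mat m ` ({..<m} \<rightarrow>\<^sub>E {..<n}) \<subseteq> S_set n m"
  proof
    fix M assume "M \<in> mat m ` ({..<m} \<rightarrow>\<^sub>E {..<n})"
    then obtain g where g: "g \<in> {..<m} \<rightarrow>\<^sub>E {..<n}" and M: "M = mat m g" by auto
    have "\<forall>j<m. {r. r < n \<and> M r j} = {g j}" using g by (auto simp: M mat_def)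
    then show "M \<in> S_set n m" using g by (auto simp: S_set_def M mat_def)
  qed
next
  show "S_set n m \<subseteq> mat m ` ({..<m} \<rightarrow>\<^sub>E {..<n})"
  proof
    fix M assume M: "M \<in> S_set n m"
    define g where "g = (\<lambda>j. if j < m then (THE r. r < n \<and> M r j) else undefined)"
    have u: "\<exists>!r. r < n \<and> M r j" if "j < m" for j
    proof -
      from M that have "card {r. r < n \<and> M r j} = 1" by (auto simp: S_set_def)
      then obtain r where eq: "{r. r < n \<and> M r j} = {r}" by (auto simp: card_1_singleton_iff)
      have "r < n \<and> M r j" using eq by blast
      moreover have "\<forall>y. y < n \<and> M y j \<longrightarrow> y = r" using eq by blast
      ultimately show ?thesis by blast
    qed
    have gj: "g j < n \<and> M (g j) j" if "j < m" for j
      using theI'[OF u[OF that]] that by (simp add: g_def)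
    have "g \<in> {..<m} \<rightarrow>\<^sub>E {..<n}" using gj by (auto simp: g_def PiE_def extensional_def Pi_def)
    moreover have "M = mat m g"
    proof (intro ext)
      fix r j
      show "M r j = mat m g r j"
      proof (cases "j < m")
        case True
        show ?thesis
        proof
          assume "M r j"
          moreover have "r < n" using M \<open>M r j\<close> by (auto simp: S_set_def)
          ultimately show "mat m g r j" using u[OF True] gj[OF True] True by (auto simp: mat_def)
        next
          assume "mat m g r j" then show "M r j" using gj[OF True] by (auto simp: mat_def)
        qed
      next
        case False then show ?thesis using M by (auto simp: S_set_def mat_def)
      qed
    qed
    ultimately show "M \<in> mat m ` ({..<m} \<rightarrow>\<^sub>E {..<n})" by blast
  qed
qed

lemma card_eq1_iff: "card {j. j < m \<and> g j = r} = 1 \<longleftrightarrow> (\<exists>c<m. g c = r \<and> (\<forall>j<m. g j = r \<longrightarrow> j = c))"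
proof
  assume "card {j. j < m \<and> g j = r} = 1"
  then obtain c where eq: "{j. j < m \<and> g j = r} = {c}" by (auto simp: card_1_singleton_iff)
  then have "c < m \<and> g c = r" by blast
  moreover have "\<forall>j<m. g j = r \<longrightarrow> j = c" using eq by blast
  ultimately show "\<exists>c<m. g c = r \<and> (\<forall>j<m. g j = r \<longrightarrow> j = c)" by blast
next
  assume "\<exists>c<m. g c = r \<and> (\<forall>j<m. g j = r \<longrightarrow> j = c)"
  then obtain c where c: "c < m" "g c = r" "\<forall>j<m. g j = r \<longrightarrow> j = c" by blast
  then have "{j. j < m \<and> g j = r} = {c}" by blast
  then show "card {j. j < m \<and> g j = r} = 1" by simp
qed

lemma stopping_mat:
  assumes g: "g \<in> {..<m} \<rightarrow>\<^sub>E {..<n}"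
  shows "stopping n m (mat m g) \<longleftrightarrow> Sg {..<m} g = {}"
proof -
  have "stopping n m (mat m g) \<longleftrightarrow> (\<forall>r<n. card {j. j < m \<and> g j = r} \<noteq> 1)"
  proof -
    have "{j. j < m \<and> mat m g r j} = {j. j < m \<and> g j = r}" for r by (auto simp: mat_def)
    then show ?thesis by (simp only: stopping_def)
  qed
  also have "\<dots> \<longleftrightarrow> Sg {..<m} g = {}"
  proof
    assume H: "\<forall>r<n. card {j. j < m \<and> g j = r} \<noteq> 1"
    show "Sg {..<m} g = {}"
    proof (rule ccontr)
      assume "Sg {..<m} g \<noteq> {}"
      then obtain c where "c \<in> Sg {..<m} g" by blast
      then have c: "c < m" "\<forall>j<m. g j = g c \<longrightarrow> j = c" unfolding Sg_def by auto
      have "g c < n" using g c(1) by auto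
      moreover have "card {j. j < m \<and> g j = g c} = 1" unfolding card_eq1_iff using c by blast
      ultimately show False using H by blast
    qed
  next
    assume H: "Sg {..<m} g = {}"
    show "\<forall>r<n. card {j. j < m \<and> g j = r} \<noteq> 1"
    proof (intro allI impI notI)
      fix r assume "r < n" "card {j. j < m \<and> g j = r} = 1"
      then obtain c where "c < m" "g c = r" "\<forall>j<m. g j = r \<longrightarrow> j = c" unfolding card_eq1_iff by blast
      then have "c \<in> Sg {..<m} g" unfolding Sg_def by blast
      with H show False by blast
    qed
  qed
  finally show ?thesis .
qed

lemma z_Stop: "z n m = card (Stop {..<m} {..<n})"
proof -
  have "{M \<in> S_set n m. stopping n m M} = mat m ` Stop {..<m} {..<n}"
  proof
    show "{M \<in> S_set n m. stopping n m M} \<subseteq> mat m ` Stop {..<m} {..<n}"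
    proof
      fix M assume M: "M \<in> {M \<in> S_set n m. stopping n m M}"
      then obtain g where g: "g \<in> {..<m} \<rightarrow>\<^sub>E {..<n}" "M = mat m g"
        unfolding mat_img[symmetric] by blast
      then have "g \<in> Stop {..<m} {..<n}" using M stopping_mat[OF g(1)] by (simp add: Stop_def)
      then show "M \<in> mat m ` Stop {..<m} {..<n}" using g(2) by blast
    qed
  next
    show "mat m ` Stop {..<m} {..<n} \<subseteq> {M \<in> S_set n m. stopping n m M}"
    proof
      fix M assume "M \<in> mat m ` Stop {..<m} {..<n}"
      then obtain g where g: "g \<in> Stop {..<m} {..<n}" "M = mat m g" by blast
      then have g1: "g \<in> {..<m} \<rightarrow>\<^sub>E {..<n}" "Sg {..<m} g = {}" by (auto simp: Stop_def)
      have "M \<in> S_set n m" unfolding mat_img[symmetric] using g1 g(2) by blast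
      moreover have "stopping n m M" using stopping_mat[OF g1(1)] g1(2) g(2) by simp
      ultimately show "M \<in> {M \<in> S_set n m. stopping n m M}" by blast
    qed
  qed
  moreover have "inj_on (mat m) (Stop {..<m} {..<n})"
    using mat_inj by (rule inj_on_subset) (auto simp: Stop_def)
  ultimately show ?thesis by (simp add: z_def card_image)
qed

lemma Sg_empty_iff: "Sg C g = {} \<longleftrightarrow> (\<forall>x\<in>C. \<exists>x'\<in>C. x' \<noteq> x \<and> g x' = g x)"
  unfolding Sg_def by blast

lemma Stop_le:
  assumes a: "bij_betw \<alpha> C' C" and b: "inj_on \<beta> Rw" "\<beta> ` Rw \<subseteq> Rw'"
    and fin: "finite C'" "finite Rw'"
  shows "card (Stop C Rw) \<le> card (Stop C' Rw')"
proof -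
  define \<Phi> where "\<Phi> g = restrict (\<lambda>j. \<beta> (g (\<alpha> j))) C'" for g :: "nat \<Rightarrow> nat"
  have inj: "inj_on \<Phi> (Stop C Rw)"
  proof (rule inj_onI)
    fix g1 g2 assume g1: "g1 \<in> Stop C Rw" and g2: "g2 \<in> Stop C Rw" and eq: "\<Phi> g1 = \<Phi> g2"
    show "g1 = g2"
    proof
      fix x show "g1 x = g2 x"
      proof (cases "x \<in> C")
        case True
        then obtain y where y: "y \<in> C'" "x = \<alpha> y" using a by (auto simp: bij_betw_def)
        have "\<beta> (g1 x) = \<beta> (g2 x)" using fun_cong[OF eq, of y] y by (simp add: \<Phi>_def)
        moreover have "g1 x \<in> Rw" "g2 x \<in> Rw" using g1 g2 True by (auto simp: Stop_def)
        ultimately show ?thesis using b(1) by (auto simp: inj_on_def)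
      next
        case False then show ?thesis using g1 g2 by (auto simp: Stop_def PiE_def extensional_def)
      qed
    qed
  qed
  have sub: "\<Phi> ` Stop C Rw \<subseteq> Stop C' Rw'"
  proof
    fix h assume "h \<in> \<Phi> ` Stop C Rw"
    then obtain g where g: "g \<in> C \<rightarrow>\<^sub>E Rw" "Sg C g = {}" and h: "h = \<Phi> g" by (auto simp: Stop_def)
    have "h \<in> C' \<rightarrow>\<^sub>E Rw'" using g(1) a b(2) unfolding h \<Phi>_def bij_betw_def by auto
    moreover have "Sg C' h = {}" unfolding Sg_empty_iff
    proof
      fix y assume y: "y \<in> C'"
      then have "\<alpha> y \<in> C" using a by (auto simp: bij_betw_def)
      then obtain x' where x': "x' \<in> C" "x' \<noteq> \<alpha> y" "g x' = g (\<alpha> y)" using g(2) unfolding Sg_empty_iff by blast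
      then obtain y' where y': "y' \<in> C'" "x' = \<alpha> y'" using a by (auto simp: bij_betw_def)
      have "y' \<noteq> y" using x' y' by auto
      moreover have "h y' = h y" using y y' x' by (simp add: h \<Phi>_def)
      ultimately show "\<exists>x'\<in>C'. x' \<noteq> y \<and> h x' = h y" using y' by blast
    qed
    ultimately show "h \<in> Stop C' Rw'" by (simp add: Stop_def)
  qed
  have "finite (C' \<rightarrow>\<^sub>E Rw')" using fin by (simp add: finite_PiE)
  then have "finite (Stop C' Rw')" unfolding Stop_def by (rule finite_subset[rotated]) blast
  then show ?thesis using card_inj_on_le[OF inj sub] by blast
qed

lemma Stop_card:
  assumes "finite C" "finite C'" "finite Rw" "finite Rw'" "card C = card C'" "card Rw = card Rw'"
  shows "card (Stop C Rw) = card (Stop C' Rw')"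
proof -
  obtain \<alpha> where a: "bij_betw \<alpha> C' C" using finite_same_card_bij assms by metis
  obtain \<alpha>' where a': "bij_betw \<alpha>' C C'" using finite_same_card_bij assms by metis
  obtain \<beta> where b: "bij_betw \<beta> Rw Rw'" using finite_same_card_bij assms by metis
  obtain \<beta>' where b': "bij_betw \<beta>' Rw' Rw" using finite_same_card_bij assms by metis
  have "card (Stop C Rw) \<le> card (Stop C' Rw')"
    by (rule Stop_le[OF a]) (use b assms in \<open>auto simp: bij_betw_def\<close>)
  moreover have "card (Stop C' Rw') \<le> card (Stop C Rw)"
    by (rule Stop_le[OF a']) (use b' assms in \<open>auto simp: bij_betw_def\<close>)
  ultimately show ?thesis by simp
qed

lemma Sg_mem: "x \<in> Sg C g \<longleftrightarrow> x \<in> C \<and> (\<forall>j'\<in>C. g j' = g x \<longrightarrow> j' = x)"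
  unfolding Sg_def by blast

lemma N_bij:
  assumes BC: "B \<subseteq> C"
  shows "bij_betw (\<lambda>g. (restrict g B, restrict g (C - B))) {g \<in> C \<rightarrow>\<^sub>E Rw. Sg C g = B}
           (SIGMA \<phi>:{\<phi> \<in> B \<rightarrow>\<^sub>E Rw. inj_on \<phi> B}. Stop (C - B) (Rw - \<phi> ` B))"
proof (rule bij_betw_imageI)
  show "inj_on (\<lambda>g. (restrict g B, restrict g (C - B))) {g \<in> C \<rightarrow>\<^sub>E Rw. Sg C g = B}"
  proof (rule inj_onI)
    fix g1 g2 assume g1: "g1 \<in> {g \<in> C \<rightarrow>\<^sub>E Rw. Sg C g = B}" and g2: "g2 \<in> {g \<in> C \<rightarrow>\<^sub>E Rw. Sg C g = B}"
      and eq: "(restrict g1 B, restrict g1 (C - B)) = (restrict g2 B, restrict g2 (C - B))"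
    show "g1 = g2"
    proof
      fix x
      consider "x \<in> B" | "x \<in> C - B" | "x \<notin> C" using BC by blast
      then show "g1 x = g2 x"
      proof cases
        case 1 then show ?thesis using fun_cong[OF arg_cong[OF eq, of fst], of x] by simp
      next
        case 2 then show ?thesis using fun_cong[OF arg_cong[OF eq, of snd], of x] by simp
      next
        case 3 then show ?thesis using g1 g2 by (auto simp: PiE_def extensional_def)
      qed
    qed
  qed
next
  let ?L = "{g \<in> C \<rightarrow>\<^sub>E Rw. Sg C g = B}"
  let ?S = "(SIGMA \<phi>:{\<phi> \<in> B \<rightarrow>\<^sub>E Rw. inj_on \<phi> B}. Stop (C - B) (Rw - \<phi> ` B))"
  show "(\<lambda>g. (restrict g B, restrict g (C - B))) ` ?L = ?S"
  proof
    show "(\<lambda>g. (restrict g B, restrict g (C - B))) ` ?L \<subseteq> ?S"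
    proof
      fix p assume "p \<in> (\<lambda>g. (restrict g B, restrict g (C - B))) ` ?L"
      then obtain g where g: "g \<in> C \<rightarrow>\<^sub>E Rw" "Sg C g = B" and p: "p = (restrict g B, restrict g (C - B))" by blast
      have sing: "\<And>x j'. x \<in> B \<Longrightarrow> j' \<in> C \<Longrightarrow> g j' = g x \<Longrightarrow> j' = x"
        using g(2) Sg_mem by blast
      have nsing: "\<And>x. x \<in> C - B \<Longrightarrow> \<exists>x'\<in>C. x' \<noteq> x \<and> g x' = g x"
        using g(2) Sg_mem by blast
      have "restrict g B \<in> B \<rightarrow>\<^sub>E Rw" using g(1) BC by auto
      moreover have "inj_on (restrict g B) B" using sing BC by (auto simp: inj_on_def)
      moreover have "restrict g (C - B) \<in> (C - B) \<rightarrow>\<^sub>E (Rw - restrict g B ` B)"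
      proof -
        have "g x \<notin> g ` B" if "x \<in> C - B" for x
        proof
          assume "g x \<in> g ` B" then obtain b where "b \<in> B" "g x = g b" by auto
          then have "x = b" using sing[of b x] that by auto
          then show False using that \<open>b \<in> B\<close> by auto
        qed
        then show ?thesis using g(1) by auto
      qed
      moreover have "Sg (C - B) (restrict g (C - B)) = {}"
        unfolding Sg_empty_iff
      proof
        fix x assume x: "x \<in> C - B"
        then obtain x' where x': "x' \<in> C" "x' \<noteq> x" "g x' = g x" using nsing by blast
        have "x' \<notin> B" using sing[of x' x] x x' by auto
        then show "\<exists>x'\<in>C - B. x' \<noteq> x \<and> restrict g (C - B) x' = restrict g (C - B) x" using x x' by auto
      qed
      ultimately show "p \<in> ?S" unfolding p Stop_def by auto
    qed
  next
    show "?S \<subseteq> (\<lambda>g. (restrict g B, restrict g (C - B))) ` ?L"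
    proof
      fix p assume "p \<in> ?S"
      then obtain \<phi> \<psi> where p: "p = (\<phi>, \<psi>)" and phi: "\<phi> \<in> B \<rightarrow>\<^sub>E Rw" "inj_on \<phi> B"
        and psi: "\<psi> \<in> (C - B) \<rightarrow>\<^sub>E (Rw - \<phi> ` B)" "Sg (C - B) \<psi> = {}" by (auto simp: Stop_def)
      define g where "g = (\<lambda>x. if x \<in> B then \<phi> x else \<psi> x)"
      have r1: "restrict g B = \<phi>" using phi(1) by (auto simp: g_def PiE_def extensional_def)
      have r2: "restrict g (C - B) = \<psi>"
      proof
        fix x show "restrict g (C - B) x = \<psi> x" using psi(1) by (cases "x \<in> C - B") (auto simp: g_def PiE_def extensional_def)
      qed
      have gin: "g \<in> C \<rightarrow>\<^sub>E Rw"
      proof -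
        have "g x \<in> Rw" if "x \<in> C" for x using that phi(1) psi(1) by (auto simp: g_def)
        moreover have "g x = undefined" if "x \<notin> C" for x using that BC psi(1) by (auto simp: g_def PiE_def extensional_def)
        ultimately show ?thesis by (auto simp: PiE_def extensional_def)
      qed
      have "Sg C g = B"
      proof
        show "B \<subseteq> Sg C g"
        proof
          fix x assume x: "x \<in> B"
          have "j' = x" if j': "j' \<in> C" "g j' = g x" for j'
          proof (cases "j' \<in> B")
            case True then show ?thesis using phi(2) x j' by (auto simp: g_def inj_on_def)
          next
            case False
            then have "\<psi> j' \<notin> \<phi> ` B" using psi(1) j'(1) by auto
            moreover have "\<psi> j' = \<phi> x" using j'(2) x False by (simp add: g_def)
            ultimately show ?thesis using x by auto
          qed
          then show "x \<in> Sg C g" using x BC Sg_mem by blast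
        qed
      next
        show "Sg C g \<subseteq> B"
        proof
          fix x assume x: "x \<in> Sg C g"
          show "x \<in> B"
          proof (rule ccontr)
            assume "x \<notin> B"
            then have "x \<in> C - B" using x Sg_mem by blast
            then obtain x' where x': "x' \<in> C - B" "x' \<noteq> x" "\<psi> x' = \<psi> x" using psi(2) unfolding Sg_empty_iff by blast
            then have "g x' = g x" using \<open>x \<notin> B\<close> by (simp add: g_def)
            then show False using x x' Sg_mem by blast
          qed
        qed
      qed
      then have "g \<in> ?L" using gin by blast
      then show "p \<in> (\<lambda>g. (restrict g B, restrict g (C - B))) ` ?L" using r1 r2 p by force
    qed
  qed
qed

lemma choose_fact_prod: "(n choose k) * fact k = (\<Prod>i = 0..<k. (n::nat) - i)"
proof (induction k)
  case 0 then show ?case by simp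
next
  case (Suc k)
  have e: "Suc k * (n choose Suc k) = (n - k) * (n choose k)"
    using binomial_absorption[of k n] binomial_absorb_comp[of n k] by simp
  have "(n choose Suc k) * fact (Suc k) = (Suc k * (n choose Suc k)) * fact k" by (simp add: algebra_simps)
  also have "\<dots> = (n - k) * ((n choose k) * fact k)" by (simp only: e mult.assoc)
  also have "\<dots> = (\<Prod>i = 0..<Suc k. n - i)" using Suc by (simp add: mult.commute)
  finally show ?case .
qed

lemma N_count:
  assumes fin: "finite C" "finite Rw" and BC: "B \<subseteq> C"
  shows "card {g \<in> C \<rightarrow>\<^sub>E Rw. Sg C g = B} =
         (card Rw choose card B) * fact (card B) * z (card Rw - card B) (card C - card B)"
proof -
  let ?I = "{\<phi> \<in> B \<rightarrow>\<^sub>E Rw. inj_on \<phi> B}"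
  have finB: "finite B" using fin BC finite_subset by blast
  have finI: "finite ?I"
  proof -
    have "finite (B \<rightarrow>\<^sub>E Rw)" using finB fin by (simp add: finite_PiE)
    then show ?thesis by (rule finite_subset[rotated]) blast
  qed
  have "card {g \<in> C \<rightarrow>\<^sub>E Rw. Sg C g = B} = card (SIGMA \<phi>:?I. Stop (C - B) (Rw - \<phi> ` B))"
    using bij_betw_same_card[OF N_bij[OF BC]] .
  also have "\<dots> = (\<Sum>\<phi>\<in>?I. card (Stop (C - B) (Rw - \<phi> ` B)))"
  proof (rule card_SigmaI)
    show "finite ?I" by (rule finI)
    show "\<forall>a\<in>?I. finite (Stop (C - B) (Rw - a ` B))"
    proof
      fix a
      have "finite ((C - B) \<rightarrow>\<^sub>E (Rw - a ` B))" using fin by (simp add: finite_PiE)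
      then show "finite (Stop (C - B) (Rw - a ` B))" unfolding Stop_def by (rule finite_subset[rotated]) blast
    qed
  qed
  also have "\<dots> = (\<Sum>\<phi>\<in>?I. z (card Rw - card B) (card C - card B))"
  proof (rule sum.cong[OF refl])
    fix \<phi> assume \<phi>: "\<phi> \<in> ?I"
    have "card (Rw - \<phi> ` B) = card Rw - card B"
      using \<phi> fin finB by (subst card_Diff_subset) (auto simp: card_image)
    moreover have "card (C - B) = card C - card B" using BC finB by (simp add: card_Diff_subset)
    ultimately show "card (Stop (C - B) (Rw - \<phi> ` B)) = z (card Rw - card B) (card C - card B)"
      unfolding z_Stop using fin by (intro Stop_card) auto
  qed
  also have "\<dots> = card ?I * z (card Rw - card B) (card C - card B)" by simp
  also have "card ?I = (card Rw choose card B) * fact (card B)"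
    using card_inj_on_subset_funcset[OF finB fin(2) order_refl] by (simp add: choose_fact_prod atLeast0LessThan)
  finally show ?thesis .
qed

definition Cov :: "nat \<Rightarrow> nat set \<Rightarrow> (nat \<Rightarrow> nat) \<Rightarrow> (nat \<Rightarrow> nat set) set" where
  "Cov h E b = {Bs \<in> PiE {..<h} (\<lambda>_. Pow E). (\<forall>i<h. card (Bs i) = b i) \<and> (\<Union>i<h. Bs i) = E}"

lemma Cov_fin: "finite E \<Longrightarrow> finite (Cov h E b)"
proof -
  assume "finite E"
  then have "finite (PiE {..<h} (\<lambda>_. Pow E))" by (simp add: finite_PiE)
  then show ?thesis unfolding Cov_def by (rule finite_subset[rotated]) blast
qed

lemma Cov_sum:
  assumes fin: "finite E"
  shows "(\<Sum>D\<in>Pow E. card (Cov h D b)) = (\<Prod>i<h. card E choose b i)"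
proof -
  let ?K = "PiE {..<h} (\<lambda>i. {X. X \<subseteq> E \<and> card X = b i})"
  have "card ?K = (\<Prod>i<h. card E choose b i)"
    by (simp add: card_PiE n_subsets fin)
  moreover have "?K = (\<Union>D\<in>Pow E. Cov h D b)"
  proof
    show "?K \<subseteq> (\<Union>D\<in>Pow E. Cov h D b)"
    proof
      fix Bs assume Bs: "Bs \<in> ?K"
      let ?D = "\<Union>i<h. Bs i"
      have "?D \<in> Pow E" using Bs by (auto simp: PiE_def Pi_def)
      moreover have "Bs \<in> Cov h ?D b" using Bs unfolding Cov_def by (auto simp: PiE_def Pi_def)
      ultimately show "Bs \<in> (\<Union>D\<in>Pow E. Cov h D b)" by blast
    qed
  next
    show "(\<Union>D\<in>Pow E. Cov h D b) \<subseteq> ?K"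
      unfolding Cov_def by (auto simp: PiE_def Pi_def)
  qed
  moreover have "card (\<Union>D\<in>Pow E. Cov h D b) = (\<Sum>D\<in>Pow E. card (Cov h D b))"
  proof (rule card_UN_disjoint)
    show "finite (Pow E)" using fin by simp
    show "\<forall>i\<in>Pow E. finite (Cov h i b)" using fin by (auto intro: Cov_fin finite_subset)
    show "\<forall>i\<in>Pow E. \<forall>j\<in>Pow E. i \<noteq> j \<longrightarrow> Cov h i b \<inter> Cov h j b = {}"
      unfolding Cov_def by blast
  qed
  ultimately show ?thesis by simp
qed

lemma sum_Pow_card:
  assumes fin: "finite E"
  shows "(\<Sum>D\<in>Pow E - {E}. (F (card D) :: int)) = (\<Sum>j<card E. int (card E choose j) * F j)"
proof -
  have "(\<Sum>D\<in>Pow E - {E}. F (card D)) = (\<Sum>j\<in>{..<card E}. \<Sum>D\<in>{D. D \<in> Pow E - {E} \<and> card D = j}. F (card D))"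
  proof (rule sum.group[symmetric])
    show "finite (Pow E - {E})" using fin by simp
    show "finite {..<card E}" by simp
    show "card ` (Pow E - {E}) \<subseteq> {..<card E}"
    proof
      fix k assume "k \<in> card ` (Pow E - {E})"
      then obtain D where "D \<subseteq> E" "D \<noteq> E" "k = card D" by auto
      then show "k \<in> {..<card E}" using fin psubset_card_mono by auto
    qed
  qed
  also have "\<dots> = (\<Sum>j<card E. int (card E choose j) * F j)"
  proof (rule sum.cong[OF refl])
    fix j assume j: "j \<in> {..<card E}"
    have "{D. D \<in> Pow E - {E} \<and> card D = j} = {D. D \<subseteq> E \<and> card D = j}" using j by auto
    then have "(\<Sum>D\<in>{D. D \<in> Pow E - {E} \<and> card D = j}. F (card D)) = (\<Sum>D\<in>{D. D \<subseteq> E \<and> card D = j}. F j)"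
      by simp
    also have "\<dots> = int (card E choose j) * F j" using fin by (simp add: n_subsets)
    finally show "(\<Sum>D\<in>{D. D \<in> Pow E - {E} \<and> card D = j}. F (card D)) = int (card E choose j) * F j" .
  qed
  finally show ?thesis .
qed

lemma Psi_count:
  assumes "finite E"
  shows "int (card (Cov h E b)) = Psi h (card E) b"
  using assms
proof (induction "card E" arbitrary: E rule: less_induct)
  case less
  note fin = less.prems
  have "(\<Sum>D\<in>Pow E. int (card (Cov h D b))) = (\<Prod>i<h. int (card E choose b i))"
    using Cov_sum[OF fin, of h b] by (metis of_nat_prod of_nat_sum)
  moreover have "(\<Sum>D\<in>Pow E. int (card (Cov h D b))) = int (card (Cov h E b)) + (\<Sum>D\<in>Pow E - {E}. int (card (Cov h D b)))"
    using fin by (subst sum.remove[of _ E]) auto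
  moreover have "(\<Sum>D\<in>Pow E - {E}. int (card (Cov h D b))) = (\<Sum>D\<in>Pow E - {E}. Psi h (card D) b)"
  proof (rule sum.cong[OF refl])
    fix D assume D: "D \<in> Pow E - {E}"
    then have "card D < card E" using fin psubset_card_mono by auto
    moreover have "finite D" using D fin finite_subset by auto
    ultimately show "int (card (Cov h D b)) = Psi h (card D) b" using less.hyps by blast
  qed
  moreover have "(\<Sum>D\<in>Pow E - {E}. Psi h (card D) b) = (\<Sum>j<card E. int (card E choose j) * Psi h j b)"
    by (rule sum_Pow_card[OF fin])
  ultimately have key: "int (card (Cov h E b)) = (\<Prod>i<h. int (card E choose b i)) - (\<Sum>j<card E. int (card E choose j) * Psi h j b)"
    by linarith
  show ?case
  proof (cases "card E = 0")
    case False
    then show ?thesis using key by (subst Psi.simps) simp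
  next
    case True
    have "(\<Prod>i<h. int (card E choose b i)) = (if \<forall>i<h. b i = 0 then 1 else 0)"
    proof (cases "\<forall>i<h. b i = 0")
      case True2: True
      then show ?thesis using True by simp
    next
      case False
      then obtain i where "i < h" "b i \<noteq> 0" by auto
      then show ?thesis using True by (auto intro!: prod_zero)
    qed
    then show ?thesis using key True by (subst Psi.simps) simp
  qed
qed

lemma peel_reach_sub: "peel_reach h NH f Fs R \<Longrightarrow> R \<subseteq> {..<f}"
  by (induction rule: peel_reach.induct) (simp_all add: peelable_def)

lemma peel_extract:
  assumes G: "G \<in> PiE {..<h} (\<lambda>_. {..<f} \<rightarrow>\<^sub>E {..<NH})"
    and Fs: "Fs = (\<lambda>i\<in>{..<h}. mat f (G i))"
  shows "extracts_at_least h NH f Fs (card (\<Union>i<h. Sg {..<f} (G i)))"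
proof -
  let ?U = "\<Union>i<h. Sg {..<f} (G i)"
  have Usub: "?U \<subseteq> {..<f}" unfolding Sg_def by blast
  have Fs_eq: "Fs i r j = (j < f \<and> G i j = r)" if "i < h" for i r j
    using that by (simp add: Fs mat_def)
  have reach: "peel_reach h NH f Fs R" if "finite R" "R \<subseteq> ?U" for R
    using that
  proof (induction R rule: finite_induct)
    case empty show ?case by (rule peel_reach.start)
  next
    case (insert c R)
    then have IH: "peel_reach h NH f Fs R" by blast
    from insert.prems obtain i where i: "i < h" "c \<in> Sg {..<f} (G i)" by blast
    have "c \<in> {..<f} \<and> (\<forall>j'\<in>{..<f}. G i j' = G i c \<longrightarrow> j' = c)" using i(2) Sg_mem by blast
    then have cf: "c < f" and sing: "\<forall>j'<f. G i j' = G i c \<longrightarrow> j' = c" using lessThan_iff by blast+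
    have "G i c < NH" using G i(1) cf by (auto simp: PiE_def Pi_def)
    moreover have "{j. j < f \<and> j \<notin> R \<and> Fs i (G i c) j} = {c}"
      using Fs_eq[OF i(1), of "G i c"] sing cf insert.hyps(2) by blast
    ultimately have "peelable h NH f Fs R c" using cf insert.hyps(2) i(1) unfolding peelable_def by blast
    then show ?case by (rule peel_reach.step[OF IH])
  qed
  have finU: "finite ?U" using Usub by (rule finite_subset) simp
  let ?P = "\<lambda>R. peel_reach h NH f Fs R \<and> ?U \<subseteq> R"
  have P0: "?P ?U" using reach[OF finU] by blast
  have bnd: "\<forall>R. ?P R \<longrightarrow> card R < Suc f"
  proof (intro allI impI)
    fix R assume "?P R"
    then have "peel_reach h NH f Fs R" by (rule conjunct1)
    then have "R \<subseteq> {..<f}" by (rule peel_reach_sub)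
    then have "card R \<le> f" using card_mono[of "{..<f}" R] by simp
    then show "card R < Suc f" by simp
  qed
  obtain R where R: "?P R" and max: "\<forall>R'. ?P R' \<longrightarrow> card R' \<le> card R"
    using Lattices_Big.ex_has_greatest_nat[OF P0 bnd] by blast
  have "R \<subseteq> {..<f}" using R by (intro peel_reach_sub) (rule conjunct1)
  then have finR: "finite R" by (rule finite_subset) simp
  have "peel_final h NH f Fs R"
    unfolding peel_final_def
  proof (intro conjI allI impI)
    show "peel_reach h NH f Fs R" using R by blast
  next
    fix i r assume i: "i < h" and r: "r < NH"
    show "card {j. j < f \<and> j \<notin> R \<and> Fs i r j} \<noteq> 1"
    proof
      assume "card {j. j < f \<and> j \<notin> R \<and> Fs i r j} = 1"
      then obtain c where c: "{j. j < f \<and> j \<notin> R \<and> Fs i r j} = {c}" by (auto simp: card_1_singleton_iff)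
      then have "c < f" "c \<notin> R" by auto
      then have "peelable h NH f Fs R c" unfolding peelable_def using i r c by blast
      then have "peel_reach h NH f Fs (insert c R)" using R by (intro peel_reach.step) auto
      then have "?P (insert c R)" using R by blast
      then have "card (insert c R) \<le> card R" using max by blast
      then show False using finR \<open>c \<notin> R\<close> by simp
    qed
  qed
  moreover have "card ?U \<le> card R" using R by (intro card_mono[OF finR]) (rule conjunct2)
  ultimately show ?thesis unfolding extracts_at_least_def by blast
qed

lemma card_group:
  assumes "finite S" "finite T" "g ` S \<subseteq> T"
  shows "card S = (\<Sum>y\<in>T. card {x \<in> S. g x = y})"
proof -
  have "(\<Sum>y\<in>T. \<Sum>x\<in>{x. x \<in> S \<and> g x = y}. (1::nat)) = (\<Sum>x\<in>S. 1)"
    by (rule sum.group[OF assms])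
  then show ?thesis by simp
qed

lemma Sg_sub: "Sg C g \<subseteq> C" unfolding Sg_def by blast

lemma fiber_card:
  fixes h f NH :: nat and Bs :: "nat \<Rightarrow> nat set"
  assumes Bs: "\<forall>i<h. Bs i \<subseteq> {..<f}"
  shows "card {G \<in> PiE {..<h} (\<lambda>_. {..<f} \<rightarrow>\<^sub>E {..<NH}). \<forall>i<h. Sg {..<f} (G i) = Bs i}
         = (\<Prod>i<h. (NH choose card (Bs i)) * fact (card (Bs i)) * z (NH - card (Bs i)) (f - card (Bs i)))"
proof -
  have "{G \<in> PiE {..<h} (\<lambda>_. {..<f} \<rightarrow>\<^sub>E {..<NH}). \<forall>i<h. Sg {..<f} (G i) = Bs i}
        = PiE {..<h} (\<lambda>i. {g \<in> {..<f} \<rightarrow>\<^sub>E {..<NH}. Sg {..<f} g = Bs i})"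
    by (auto simp: PiE_iff extensional_def)
  note eq = this
  have "card {G \<in> PiE {..<h} (\<lambda>_. {..<f} \<rightarrow>\<^sub>E {..<NH}). \<forall>i<h. Sg {..<f} (G i) = Bs i}
      = (\<Prod>i<h. card {g \<in> {..<f} \<rightarrow>\<^sub>E {..<NH}. Sg {..<f} g = Bs i})"
    unfolding eq by (rule card_PiE) simp
  also have "\<dots> = (\<Prod>i<h. (NH choose card (Bs i)) * fact (card (Bs i)) * z (NH - card (Bs i)) (f - card (Bs i)))"
  proof (rule prod.cong[OF refl])
    fix i assume "i \<in> {..<h}"
    then have "Bs i \<subseteq> {..<f}" using Bs by auto
    from N_count[OF finite_lessThan finite_lessThan this, of NH]
    show "card {g \<in> {..<f} \<rightarrow>\<^sub>E {..<NH}. Sg {..<f} g = Bs i} =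
      (NH choose card (Bs i)) * fact (card (Bs i)) * z (NH - card (Bs i)) (f - card (Bs i))" by simp
  qed
  finally show ?thesis .
qed

definition Nb :: "nat \<Rightarrow> nat \<Rightarrow> nat \<Rightarrow> nat" where
  "Nb NH f k = (NH choose k) * fact k * z (NH - k) (f - k)"

lemma E_card:
  fixes h f NH e :: nat and E :: "nat set"
  assumes E: "E \<subseteq> {..<f}" "card E = e"
  shows "card {G \<in> PiE {..<h} (\<lambda>_. {..<f} \<rightarrow>\<^sub>E {..<NH}). (\<Union>i<h. Sg {..<f} (G i)) = E}
         = (\<Sum>b\<in>T_set h e. card (Cov h E b) * (\<Prod>i<h. Nb NH f (b i)))"
proof -
  let ?SS = "PiE {..<h} (\<lambda>_. {..<f} \<rightarrow>\<^sub>E {..<NH})"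
  let ?L = "{G \<in> ?SS. (\<Union>i<h. Sg {..<f} (G i)) = E}"
  let ?CA = "{Bs \<in> PiE {..<h} (\<lambda>_. Pow E). (\<Union>i<h. Bs i) = E}"
  let ?sgv = "\<lambda>G. restrict (\<lambda>i. Sg {..<f} (G i)) {..<h}"
  let ?sz = "\<lambda>Bs. restrict (\<lambda>i. card (Bs i)) {..<h}"
  have finE: "finite E" using E(1) by (rule finite_subset) simp
  have finSS: "finite ?SS" by (simp add: finite_PiE)
  have finCA: "finite ?CA"
  proof -
    have "finite (PiE {..<h} (\<lambda>_. Pow E))" using finE by (simp add: finite_PiE)
    then show ?thesis by (rule finite_subset[rotated]) blast
  qed
  have finT: "finite (T_set h e)" unfolding T_set_def by (simp add: finite_PiE)
  have "card ?L = (\<Sum>Bs\<in>?CA. card {G \<in> ?L. ?sgv G = Bs})"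
  proof (rule card_group)
    show "finite ?L" using finSS by (rule finite_subset[rotated]) blast
    show "finite ?CA" by (rule finCA)
    show "?sgv ` ?L \<subseteq> ?CA"
    proof
      fix Bs assume "Bs \<in> ?sgv ` ?L"
      then obtain G where G: "G \<in> ?L" and Bs: "Bs = ?sgv G" by blast
      have "Bs \<in> PiE {..<h} (\<lambda>_. Pow E)" using G unfolding Bs by auto
      moreover have "(\<Union>i<h. Bs i) = E" using G unfolding Bs by auto
      ultimately show "Bs \<in> ?CA" by blast
    qed
  qed
  also have "\<dots> = (\<Sum>Bs\<in>?CA. \<Prod>i<h. Nb NH f (card (Bs i)))"
  proof (rule sum.cong[OF refl])
    fix Bs assume Bs: "Bs \<in> ?CA"
    have key: "?sgv G = Bs \<longleftrightarrow> (\<forall>i<h. Sg {..<f} (G i) = Bs i)" for G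
    proof
      assume "?sgv G = Bs" then show "\<forall>i<h. Sg {..<f} (G i) = Bs i" by (metis lessThan_iff restrict_apply)
    next
      assume H: "\<forall>i<h. Sg {..<f} (G i) = Bs i"
      show "?sgv G = Bs"
      proof
        fix i show "?sgv G i = Bs i" using H Bs by (cases "i < h") (auto simp: PiE_def extensional_def)
      qed
    qed
    have un: "(\<Union>i<h. Sg {..<f} (G i)) = E" if "\<forall>i<h. Sg {..<f} (G i) = Bs i" for G
      using Bs that by auto
    have "{G \<in> ?L. ?sgv G = Bs} = {G \<in> ?SS. \<forall>i<h. Sg {..<f} (G i) = Bs i}"
    proof (rule set_eqI)
      fix G
      show "G \<in> {G \<in> ?L. ?sgv G = Bs} \<longleftrightarrow> G \<in> {G \<in> ?SS. \<forall>i<h. Sg {..<f} (G i) = Bs i}"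
        using key[of G] un[of G] by blast
    qed
    moreover have "\<forall>i<h. Bs i \<subseteq> {..<f}" using Bs E by (auto simp: PiE_def Pi_def)
    ultimately show "card {G \<in> ?L. ?sgv G = Bs} = (\<Prod>i<h. Nb NH f (card (Bs i)))"
      using fiber_card[of h Bs f NH] by (simp add: Nb_def)
  qed
  also have "\<dots> = (\<Sum>b\<in>T_set h e. \<Sum>Bs\<in>{Bs. Bs \<in> ?CA \<and> ?sz Bs = b}. \<Prod>i<h. Nb NH f (card (Bs i)))"
  proof (rule sum.group[symmetric, OF finCA finT])
    show "?sz ` ?CA \<subseteq> T_set h e"
    proof
      fix b assume "b \<in> ?sz ` ?CA"
      then obtain Bs where Bs: "Bs \<in> ?CA" and b: "b = ?sz Bs" by blast
      have "card (Bs i) \<le> e" if "i < h" for i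
        using Bs that E(2) card_mono[OF finE] by (auto simp: PiE_def Pi_def)
      then show "b \<in> T_set h e" unfolding b T_set_def by auto
    qed
  qed
  also have "\<dots> = (\<Sum>b\<in>T_set h e. card (Cov h E b) * (\<Prod>i<h. Nb NH f (b i)))"
  proof (rule sum.cong[OF refl])
    fix b assume b: "b \<in> T_set h e"
    have "{Bs. Bs \<in> ?CA \<and> ?sz Bs = b} = Cov h E b"
    proof (intro set_eqI iffI)
      fix Bs assume "Bs \<in> {Bs. Bs \<in> ?CA \<and> ?sz Bs = b}"
      then have Bs: "Bs \<in> ?CA" and sz: "?sz Bs = b" by blast+
      have "card (Bs i) = b i" if "i < h" for i using fun_cong[OF sz, of i] that by simp
      then show "Bs \<in> Cov h E b" unfolding Cov_def using Bs by blast
    next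
      fix Bs assume Bs: "Bs \<in> Cov h E b"
      have "?sz Bs = b"
      proof
        fix i show "?sz Bs i = b i" using Bs b by (cases "i < h") (auto simp: Cov_def T_set_def PiE_def extensional_def)
      qed
      then show "Bs \<in> {Bs. Bs \<in> ?CA \<and> ?sz Bs = b}" using Bs unfolding Cov_def by blast
    qed
    moreover have "(\<Prod>i<h. Nb NH f (card (Bs i))) = (\<Prod>i<h. Nb NH f (b i))" if "Bs \<in> Cov h E b" for Bs
      using that unfolding Cov_def by (intro prod.cong) auto
    ultimately show "(\<Sum>Bs\<in>{Bs. Bs \<in> ?CA \<and> ?sz Bs = b}. \<Prod>i<h. Nb NH f (card (Bs i))) =
      card (Cov h E b) * (\<Prod>i<h. Nb NH f (b i))" by simp
  qed
  finally show ?thesis .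
qed

theorem lemma2:
  fixes h NH f e :: nat
  assumes "h \<ge> 2" and "NH \<ge> 1" and "e \<le> f"
  shows "int (card {Fs \<in> states h NH f. extracts_at_least h NH f Fs e}) \<ge> Theta NH f h e"
proof -
  let ?F = "{..<f} \<rightarrow>\<^sub>E {..<NH}"
  let ?SS = "PiE {..<h} (\<lambda>_. ?F)"
  let ?U = "\<lambda>G. \<Union>i<h. Sg {..<f} (G i)"
  let ?A = "{G \<in> ?SS. card (?U G) = e}"
  let ?Es = "{E. E \<subseteq> {..<f} \<and> card E = e}"
  let ?X = "\<Sum>b\<in>T_set h e. Psi h e b * (\<Prod>i<h. int (Nb NH f (b i)))"
  let ?Tg = "{Fs \<in> states h NH f. extracts_at_least h NH f Fs e}"
  have finSS: "finite ?SS" by (simp add: finite_PiE)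
  have finA: "finite ?A" using finSS by (rule finite_subset[rotated]) blast
  have finEs: "finite ?Es" by (rule finite_subset[of _ "Pow {..<f}"]) auto
  have Usub: "?U G \<subseteq> {..<f}" for G using Sg_sub by blast
  have "card ?A = (\<Sum>E\<in>?Es. card {G \<in> ?A. ?U G = E})"
  proof (rule card_group[OF finA finEs])
    show "?U ` ?A \<subseteq> ?Es" using Usub by blast
  qed
  then have "int (card ?A) = (\<Sum>E\<in>?Es. int (card {G \<in> ?A. ?U G = E}))" by simp
  also have "\<dots> = (\<Sum>E\<in>?Es. ?X)"
  proof (rule sum.cong[OF refl])
    fix E assume E: "E \<in> ?Es"
    then have E1: "E \<subseteq> {..<f}" and E2: "card E = e" by auto
    have finE: "finite E" using E1 by (rule finite_subset) simp
    have "{G \<in> ?A. ?U G = E} = {G \<in> ?SS. ?U G = E}" using E2 by auto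
    then have "card {G \<in> ?A. ?U G = E} = (\<Sum>b\<in>T_set h e. card (Cov h E b) * (\<Prod>i<h. Nb NH f (b i)))"
      using E_card[OF E1 E2, of h NH] by simp
    then have "int (card {G \<in> ?A. ?U G = E}) = (\<Sum>b\<in>T_set h e. int (card (Cov h E b)) * (\<Prod>i<h. int (Nb NH f (b i))))"
      by simp
    also have "\<dots> = ?X" using Psi_count[OF finE] E2 by simp
    finally show "int (card {G \<in> ?A. ?U G = E}) = ?X" .
  qed
  also have "\<dots> = int (f choose e) * ?X"
    using n_subsets[of "{..<f}" e] by simp
  finally have cA: "int (card ?A) = int (f choose e) * ?X" .
  have Psi_nn: "0 \<le> Psi h e b" for b
    using Psi_count[of "{..<e}" h b] by simp
  have "Theta NH f h e \<le> int (f choose e) * ?X"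
    unfolding Theta_def
  proof (rule mult_left_mono)
    show "0 \<le> int (f choose e)" by simp
    have eqt: "(\<Prod>i<h. int ((NH choose b i) * fact (b i) * z (NH - b i) (f - b i))) = (\<Prod>i<h. int (Nb NH f (b i)))" for b
      by (simp add: Nb_def)
    show "(\<Sum>b\<in>{b \<in> T_set h e. e \<le> xi h b}. Psi h e b * (\<Prod>i<h. int ((NH choose b i) * fact (b i) * z (NH - b i) (f - b i)))) \<le> ?X"
      unfolding eqt
    proof (rule sum_mono2)
      show "finite (T_set h e)" unfolding T_set_def by (simp add: finite_PiE)
      show "{b \<in> T_set h e. e \<le> xi h b} \<subseteq> T_set h e" by blast
      show "0 \<le> Psi h e b * (\<Prod>i<h. int (Nb NH f (b i)))" for b
        using Psi_nn[of b] by (simp add: prod_nonneg)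
    qed
  qed
  moreover have "card ?A \<le> card ?Tg"
  proof -
    let ?\<Phi> = "\<lambda>G. restrict (\<lambda>i. mat f (G i)) {..<h}"
    have inj: "inj_on ?\<Phi> ?A"
    proof (rule inj_onI)
      fix G1 G2 assume G1: "G1 \<in> ?A" and G2: "G2 \<in> ?A" and eq: "?\<Phi> G1 = ?\<Phi> G2"
      show "G1 = G2"
      proof
        fix i show "G1 i = G2 i"
        proof (cases "i < h")
          case True
          then have "mat f (G1 i) = mat f (G2 i)" using fun_cong[OF eq, of i] by simp
          moreover have "G1 i \<in> ?F" "G2 i \<in> ?F" using G1 G2 True by auto
          ultimately show ?thesis using mat_inj[of f NH] by (auto simp: inj_on_def)
        next
          case False then show ?thesis using G1 G2 by (auto simp: PiE_def extensional_def)
        qed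
      qed
    qed
    have sub: "?\<Phi> ` ?A \<subseteq> ?Tg"
    proof
      fix Fs assume "Fs \<in> ?\<Phi> ` ?A"
      then obtain G where G: "G \<in> ?SS" "card (?U G) = e" and Fs: "Fs = ?\<Phi> G" by blast
      have "mat f (G i) \<in> S_set NH f" if "i < h" for i
        using G(1) that mat_img[of f NH] by blast
      then have "Fs \<in> states h NH f" unfolding Fs states_def by auto
      moreover have "extracts_at_least h NH f Fs e"
        using peel_extract[OF G(1) Fs] G(2) by simp
      ultimately show "Fs \<in> ?Tg" by blast
    qed
    have finTg: "finite ?Tg"
    proof -
      have "finite (mat f ` ({..<f} \<rightarrow>\<^sub>E {..<NH}))" by (intro finite_imageI finite_PiE) auto
      then have "finite (S_set NH f)" by (simp only: mat_img)
      then have "finite (states h NH f)" unfolding states_def by (simp add: finite_PiE)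
      then show ?thesis by (rule finite_subset[rotated]) blast
    qed
    show ?thesis by (rule card_inj_on_le[OF inj sub finTg])
  qed
  ultimately show ?thesis using cA by linarith
qed

end
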